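(* ${\sf MBRev}(\mathcal D_{ERC}(H))=\Omega(\log\log H)$ as $H\to\infty$.
   Context: $\mathcal D_{ERC}(H)$ (equal revenue curve truncated at $H$) is the distribution on $[1,H]$ with $\Pr[v\ge t]=1/t$ for $t\in[1,H]$, i.e. density $q(v)=1/v^2$ on $[1,H)$ and an atom of mass $1/H$ at $H$. For a distribution with density $q$ on $[1,H]$ the mean-based revenue is ${\sf MBRev}=\sup_{x}\int_1^H q(v)\big(v\,x(v)-\sup_{1\le w<v}(v-w)x(w)\big)\,dv$ (plus the analogous contribution of any atom), where the supremum is over functions $x:[1,H]\to[0,1]$. Note ${\sf Mye}(\mathcal D_{ERC}(H))=1$. *)

theory Defs
  imports "HOL-Analysis.Analysis" "HOL-Library.Landau_Symbols"
begin

definition dev :: "(real \<Rightarrow> real) \<Rightarrow> real \<Rightarrow> real" where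
  "dev x v = (SUP w\<in>{1..<v}. (v - w) * x w)"

text \<open>Density of the truncated equal revenue curve on [1,H).\<close>
definition q_ERC :: "real \<Rightarrow> real" where
  "q_ERC v = 1 / v\<^sup>2"

text \<open>Mean-based revenue objective of an allocation x for D_ERC(H):
  continuous part with density 1/v^2 on [1,H) plus the atom of mass 1/H at H.\<close>
definition mb_obj :: "real \<Rightarrow> (real \<Rightarrow> real) \<Rightarrow> real" where
  "mb_obj H x =
     (LINT v:{1<..<H}|lborel. q_ERC v * (v * x v - dev x v))
     + (1 / H) * (H * x H - dev x H)"

definition feasible_alloc :: "real \<Rightarrow> (real \<Rightarrow> real) \<Rightarrow> bool" where
  "feasible_alloc H x \<longleftrightarrow> (\<forall>v\<in>{1..H}. 0 \<le> x v \<and> x v \<le> 1)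
     \<and> set_integrable lborel {1<..<H} (\<lambda>v. q_ERC v * (v * x v - dev x v))"

definition MBRev_ERC :: "real \<Rightarrow> real" where
  "MBRev_ERC H = (SUP x\<in>{x. feasible_alloc H x}. mb_obj H x)"

end

theory Submission
  imports Defs
begin

lemma key_ineq:
  fixes v w :: real
  assumes "exp 1 \<le> v" "1 \<le> w" "w < v"
  shows "(v-w) * ln w \<le> v * ln v - v/2 * ln (ln v)"
proof -
  have v0: "0 < v" using assms by (smt (verit) exp_gt_zero)
  have lv: "1 \<le> ln v" using assms v0 ln_ge_iff by auto
  define s where "s = 1 / sqrt (ln v)"
  have sq: "1 \<le> sqrt (ln v)" using lv by simp
  have s0: "0 < s" "s \<le> 1" using sq by (auto simp: s_def)
  have lns: "ln s = - (ln (ln v) / 2)"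
    using lv by (simp add: s_def ln_div ln_sqrt)
  have sl: "s * ln v = sqrt (ln v)"
    using lv by (simp add: s_def field_simps)
  have lnsq: "ln (ln v) / 2 \<le> sqrt (ln v)"
  proof -
    have "ln (sqrt (ln v)) \<le> sqrt (ln v) - 1" using sq by (intro ln_le_minus_one) auto
    thus ?thesis using lv by (simp add: ln_sqrt)
  qed
  have lw: "0 \<le> ln w" using assms by simp
  show ?thesis
  proof (cases "w \<le> s * v")
    case True
    have "(v-w) * ln w \<le> v * ln w" using lw assms by (intro mult_right_mono) auto
    also have "\<dots> \<le> v * ln (s * v)" using True assms v0 s0
      by (intro mult_left_mono) auto
    also have "\<dots> = v * ln v - v/2 * ln (ln v)" using s0 v0 lns
      by (simp add: ln_mult algebra_simps)
    finally show ?thesis .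
  next
    case False
    have a1: "v - w \<le> v - s * v" using False by simp
    have a2: "ln w \<le> ln v" using assms by simp
    have a3: "0 \<le> v - s * v" using s0 v0 by (simp add: algebra_simps)
    have "(v-w) * ln w \<le> (v - s * v) * ln v"
      by (rule mult_mono[OF a1 a2 a3 lw])
    also have "\<dots> = v * ln v - v * sqrt (ln v)" using sl by (simp add: algebra_simps)
    also have "\<dots> \<le> v * ln v - v/2 * ln (ln v)"
    proof -
      have "v * (ln (ln v)/2) \<le> v * sqrt (ln v)"
        by (rule mult_left_mono[OF lnsq]) (use v0 in simp)
      thus ?thesis by simp
    qed
    finally show ?thesis .
  qed
qed


lemma dev_le:
  assumes "1 < v" "\<And>w. w \<in> {1..<v} \<Longrightarrow> (v-w) * x w \<le> M"
  shows "dev x v \<le> M"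
  unfolding dev_def using assms by (intro cSUP_least) auto

lemma dev_ge:
  assumes "bdd_above ((\<lambda>w. (v-w) * x w) ` {1..<v})" "w \<in> {1..<v}"
  shows "(v-w) * x w \<le> dev x v"
  unfolding dev_def using assms by (intro cSUP_upper) auto

lemma dev_feasible_nonneg:
  assumes "feasible_alloc H x" "1 < v" "v \<le> H"
  shows "0 \<le> dev x v"
proof -
  have x01: "\<And>w. w \<in> {1..H} \<Longrightarrow> 0 \<le> x w \<and> x w \<le> 1"
    using assms(1) unfolding feasible_alloc_def by blast
  have "bdd_above ((\<lambda>w. (v-w) * x w) ` {1..<v})"
  proof (rule bdd_aboveI2)
    fix w assume w: "w \<in> {1..<v}"
    then have "x w \<le> 1" "0 \<le> x w" using x01 assms by auto
    then show "(v-w) * x w \<le> v" using w by (smt (verit) atLeastLessThan_iff mult_left_le)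
  qed
  then have "(v-1) * x 1 \<le> dev x v" using assms by (intro dev_ge) auto
  moreover have "0 \<le> x 1" using x01 assms by auto
  ultimately show ?thesis using assms by (smt (verit) mult_nonneg_nonneg)
qed

lemma mb_obj_upper:
  assumes "feasible_alloc H x" "1 < H"
  shows "mb_obj H x \<le> (LINT v:{1<..<H}|lborel. (1::real)) + 1"
proof -
  have x01: "\<And>w. w \<in> {1..H} \<Longrightarrow> 0 \<le> x w \<and> x w \<le> 1"
    using assms(1) unfolding feasible_alloc_def by blast
  have int: "set_integrable lborel {1<..<H} (\<lambda>v. q_ERC v * (v * x v - dev x v))"
    using assms(1) unfolding feasible_alloc_def by blast
  have int1: "set_integrable lborel {1<..<H} (\<lambda>v. (1::real))"
    by (rule set_integrable_subset[OF borel_integrable_atLeastAtMost'[of 1 H]]) auto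
  have "(LINT v:{1<..<H}|lborel. q_ERC v * (v * x v - dev x v)) \<le> (LINT v:{1<..<H}|lborel. (1::real))"
  proof (rule set_integral_mono[OF int int1])
    fix v assume v: "v \<in> {1<..<H}"
    have d: "0 \<le> dev x v" using dev_feasible_nonneg[OF assms(1)] v by auto
    have xv: "x v \<le> 1" using x01 v by auto
    have "q_ERC v * (v * x v - dev x v) \<le> q_ERC v * (v * x v)"
      using d v by (intro mult_left_mono) (auto simp: q_ERC_def)
    also have "\<dots> = x v / v" using v by (simp add: q_ERC_def power2_eq_square)
    also have "\<dots> \<le> 1" using xv v by (simp add: divide_le_eq)
    finally show "q_ERC v * (v * x v - dev x v) \<le> 1" .
  qed
  moreover have "(1 / H) * (H * x H - dev x H) \<le> 1"
  proof -
    have d: "0 \<le> dev x H" using dev_feasible_nonneg[OF assms(1)] assms by auto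
    have xv: "x H \<le> 1" using x01 assms by auto
    have "(1 / H) * (H * x H - dev x H) \<le> (1/H) * (H * x H)"
      using d assms by (intro mult_left_mono) auto
    also have "\<dots> = x H" using assms by simp
    finally show ?thesis using xv by simp
  qed
  ultimately show ?thesis unfolding mb_obj_def by linarith
qed

lemma bdd_MBRev:
  assumes "1 < H"
  shows "bdd_above (mb_obj H ` {x. feasible_alloc H x})"
  using mb_obj_upper[OF _ assms] by (intro bdd_aboveI2) auto


definition x0 :: "real \<Rightarrow> real \<Rightarrow> real" where
  "x0 H v = ln v / ln H"

lemma x0_bdd:
  assumes "1 < H" "1 < v"
  shows "bdd_above ((\<lambda>w. (v-w) * x0 H w) ` {1..<v})"
proof (rule bdd_aboveI2)
  fix w assume w: "w \<in> {1..<v}"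
  have "(v-w) * ln w \<le> v * ln v"
    using w assms by (intro mult_mono) auto
  then show "(v-w) * x0 H w \<le> v * ln v / ln H"
    using assms by (simp add: x0_def divide_right_mono)
qed

lemma dev0_nonneg:
  assumes "1 < H" "1 < v"
  shows "0 \<le> dev (x0 H) v"
proof -
  have "(v-1) * x0 H 1 \<le> dev (x0 H) v"
    using assms by (intro dev_ge x0_bdd) auto
  thus ?thesis by (simp add: x0_def)
qed

lemma dev0_le1:
  assumes "1 < H" "1 < v"
  shows "dev (x0 H) v \<le> v * x0 H v"
proof (rule dev_le[OF assms(2)])
  fix w assume w: "w \<in> {1..<v}"
  have "(v-w) * ln w \<le> v * ln v"
    using w assms by (intro mult_mono) auto
  then show "(v-w) * x0 H w \<le> v * x0 H v"
    using assms by (simp add: x0_def divide_right_mono)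
qed

lemma dev0_le2:
  assumes "1 < H" "exp 1 \<le> v"
  shows "dev (x0 H) v \<le> (v * ln v - v/2 * ln (ln v)) / ln H"
proof (rule dev_le)
  show "1 < v" using assms(2) by (smt (verit) one_less_exp_iff)
  fix w assume w: "w \<in> {1..<v}"
  then have "(v-w) * ln w \<le> v * ln v - v/2 * ln (ln v)"
    using assms by (intro key_ineq) auto
  then show "(v-w) * x0 H w \<le> (v * ln v - v/2 * ln (ln v)) / ln H"
    using assms by (simp add: x0_def divide_right_mono)
qed

lemma D0_mono:
  assumes "1 < H"
  shows "mono (\<lambda>v. indicator {1<..} v * dev (x0 H) v)"
proof (rule monoI)
  fix a b :: real assume ab: "a \<le> b"
  show "indicator {1<..} a * dev (x0 H) a \<le> indicator {1<..} b * dev (x0 H) b"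
  proof (cases "1 < a")
    case False
    then show ?thesis using dev0_nonneg[OF assms, of b] by (auto simp: indicator_def)
  next
    case True
    have "dev (x0 H) a \<le> dev (x0 H) b"
    proof (rule dev_le[OF True])
      fix w assume w: "w \<in> {1..<a}"
      have "(a-w) * x0 H w \<le> (b-w) * x0 H w"
        using w ab assms by (intro mult_right_mono) (auto simp: x0_def)
      also have "\<dots> \<le> dev (x0 H) b"
        using w ab True assms by (intro dev_ge x0_bdd) auto
      finally show "(a-w) * x0 H w \<le> dev (x0 H) b" .
    qed
    then show ?thesis using True ab by (auto simp: indicator_def)
  qed
qed

lemma feasible_x0:
  assumes "1 < H"
  shows "feasible_alloc H (x0 H)"
  unfolding feasible_alloc_def
proof
  show "\<forall>v\<in>{1..H}. 0 \<le> x0 H v \<and> x0 H v \<le> 1"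
    using assms by (auto simp: x0_def divide_le_eq)
  define D where "D = (\<lambda>v. indicator {1<..} v * dev (x0 H) v)"
  have Dm: "D \<in> borel_measurable borel" unfolding D_def
    by (rule borel_measurable_mono[OF D0_mono[OF assms]])
  have Dm': "D \<in> borel_measurable lborel" using Dm by simp
  have int1: "set_integrable lborel {1<..<H} (\<lambda>v. (1::real))"
    by (rule set_integrable_subset[OF borel_integrable_atLeastAtMost'[of 1 H]]) auto
  have eq: "(\<lambda>v. indicator {1<..<H} v *\<^sub>R (q_ERC v * (v * x0 H v - dev (x0 H) v)))
      = (\<lambda>v. indicator {1<..<H} v *\<^sub>R (q_ERC v * (v * x0 H v - D v)))"
    by (auto simp: D_def indicator_def fun_eq_iff)
  have "set_borel_measurable lborel {1<..<H} (\<lambda>v. q_ERC v * (v * x0 H v - dev (x0 H) v))"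
    unfolding set_borel_measurable_def eq using Dm'
    by (simp add: q_ERC_def x0_def) measurable
  then show "set_integrable lborel {1<..<H} (\<lambda>v. q_ERC v * (v * x0 H v - dev (x0 H) v))"
  proof (rule set_integrable_bound[OF int1])
    show "AE v in lborel. v \<in> {1<..<H} \<longrightarrow> norm (q_ERC v * (v * x0 H v - dev (x0 H) v)) \<le> norm (1::real)"
    proof (rule AE_I2, rule impI)
      fix v :: real assume v: "v \<in> {1<..<H}"
      have d: "0 \<le> dev (x0 H) v" "dev (x0 H) v \<le> v * x0 H v"
        using dev0_nonneg dev0_le1 assms v by auto
      have xv: "x0 H v \<le> 1" using assms v by (auto simp: x0_def divide_le_eq)
      have "q_ERC v * (v * x0 H v - dev (x0 H) v) \<le> q_ERC v * (v * x0 H v)"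
        using d v by (intro mult_left_mono) (auto simp: q_ERC_def)
      also have "\<dots> = x0 H v / v" using v by (simp add: q_ERC_def power2_eq_square)
      also have "\<dots> \<le> 1" using xv v by (simp add: divide_le_eq)
      finally have "q_ERC v * (v * x0 H v - dev (x0 H) v) \<le> 1" .
      moreover have "0 \<le> q_ERC v * (v * x0 H v - dev (x0 H) v)"
        using d by (simp add: q_ERC_def)
      ultimately show "norm (q_ERC v * (v * x0 H v - dev (x0 H) v)) \<le> norm (1::real)" by simp
    qed
  qed
qed


lemma int_inv:
  fixes a b :: real
  assumes "0 < a" "a \<le> b"
  shows "set_integrable lborel {a..<b} (\<lambda>v. 1 / v)"
    and "(LINT v:{a..<b}|lborel. 1 / v) = ln b - ln a"
proof -
  have c: "continuous_on {a..b} (\<lambda>v::real. 1 / v)"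
    using assms by (intro continuous_intros) auto
  show "set_integrable lborel {a..<b} (\<lambda>v. 1 / v)"
    by (rule set_integrable_subset[OF borel_integrable_atLeastAtMost'[OF c]]) auto
  have "(LBINT v=a..b. 1 / v) = ln b - ln a"
  proof (rule interval_integral_FTC_finite)
    show "continuous_on {min a b..max a b} (\<lambda>v::real. 1 / v)" using c assms by simp
    fix v assume "min a b \<le> v" "v \<le> max a b"
    then have v: "0 < v" using assms by simp
    have "(ln has_real_derivative 1 / v) (at v within {min a b..max a b})"
      using v by (auto intro!: derivative_eq_intros)
    then show "(ln has_vector_derivative 1 / v) (at v within {min a b..max a b})"
      by (simp add: has_real_derivative_iff_has_vector_derivative)
  qed
  then show "(LINT v:{a..<b}|lborel. 1 / v) = ln b - ln a"
    using assms by (simp add: interval_integral_Ico)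
qed

lemma mb_obj_x0_lower:
  assumes "exp 4 \<le> H"
  shows "ln (ln H / 2) / 4 \<le> mb_obj H (x0 H)"
proof -
  define L where "L = ln H"
  have H1: "1 < H" using assms by (smt (verit) one_less_exp_iff)
  have H0: "0 < H" using H1 by simp
  have L4: "4 \<le> L" using assms H0 ln_ge_iff by (simp add: L_def)
  define a where "a = exp (L/2)"
  have lna: "ln a = L/2" by (simp add: a_def)
  have a_e: "exp 1 \<le> a" using L4 by (simp add: a_def)
  have a1: "1 < a" using L4 by (simp add: a_def)
  have aH: "a < H"
  proof -
    have "a < exp L" unfolding a_def using L4 by simp
    also have "exp L = H" using H0 by (simp add: L_def)
    finally show ?thesis .
  qed
  define c where "c = ln (L/2) / (2*L)"
  have c0: "0 \<le> c" using L4 by (simp add: c_def)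
  define g where "g = (\<lambda>v. q_ERC v * (v * x0 H v - dev (x0 H) v))"
  have gint: "set_integrable lborel {1<..<H} g"
    using feasible_x0[OF H1] unfolding feasible_alloc_def g_def by blast
  have g0: "\<And>v. v \<in> {1<..<H} \<Longrightarrow> 0 \<le> g v"
    using dev0_le1[OF H1] by (simp add: g_def q_ERC_def)
  have split: "{1<..<H} = {1<..<a} \<union> {a..<H}" using a1 aH by auto
  have gi1: "set_integrable lborel {1<..<a} g"
    by (rule set_integrable_subset[OF gint]) (use aH in auto)
  have gi2: "set_integrable lborel {a..<H} g"
    by (rule set_integrable_subset[OF gint]) (use a1 in auto)
  have I1: "0 \<le> (LINT v:{1<..<a}|lborel. g v)"
    unfolding set_lebesgue_integral_def
    by (rule Bochner_Integration.integral_nonneg) (use g0 aH in \<open>auto simp: indicator_def\<close>)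
  have ii: "set_integrable lborel {a..<H} (\<lambda>v. 1 / v)"
     and iv: "(LINT v:{a..<H}|lborel. 1 / v) = ln H - ln a"
    using int_inv[of a H] a1 aH by auto
  have ci: "set_integrable lborel {a..<H} (\<lambda>v. c * (1 / v))"
    by (intro set_integrable_mult_right ii)
  have I2: "(LINT v:{a..<H}|lborel. c * (1 / v)) \<le> (LINT v:{a..<H}|lborel. g v)"
  proof (rule set_integral_mono[OF ci gi2])
    fix v assume v: "v \<in> {a..<H}"
    have ve: "exp 1 \<le> v" using v a_e by auto
    have v1: "1 < v" using v a1 by auto
    have "ln a \<le> ln v" using v a1 by simp
    then have lnv: "L/2 \<le> ln v" using lna by simp
    have lnl: "ln (L/2) \<le> ln (ln v)" using lnv L4 by simp
    have d: "dev (x0 H) v \<le> (v * ln v - v/2 * ln (ln v)) / L"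
      using dev0_le2[OF H1 ve] by (simp add: L_def)
    have Lp: "0 < L" using L4 by simp
    have "v * x0 H v - dev (x0 H) v \<ge> v/2 * ln (ln v) / L"
      using d Lp by (simp add: x0_def L_def[symmetric] diff_divide_distrib)
    moreover have "v/2 * ln (ln v) / L \<ge> v/2 * ln (L/2) / L"
      using lnl Lp v1 by (intro divide_right_mono mult_left_mono) auto
    ultimately have r: "v * x0 H v - dev (x0 H) v \<ge> v/2 * ln (L/2) / L" by linarith
    have "c * (1 / v) = q_ERC v * (v/2 * ln (L/2) / L)"
      using v1 by (simp add: c_def q_ERC_def power2_eq_square field_simps)
    also have "\<dots> \<le> q_ERC v * (v * x0 H v - dev (x0 H) v)"
      using r by (intro mult_left_mono) (auto simp: q_ERC_def)
    finally show "c * (1 / v) \<le> g v" by (simp add: g_def)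
  qed
  have "(LINT v:{a..<H}|lborel. c * (1 / v)) = c * (LINT v:{a..<H}|lborel. 1 / v)"
    by (rule set_integral_mult_right)
  also have "\<dots> = c * (L/2)"
    using iv lna by (simp add: L_def)
  also have "\<dots> = ln (L/2) / 4" using L4 by (simp add: c_def)
  finally have I2': "ln (L/2) / 4 \<le> (LINT v:{a..<H}|lborel. g v)" using I2 by simp
  have "(LINT v:{1<..<H}|lborel. g v) = (LINT v:{1<..<a}|lborel. g v) + (LINT v:{a..<H}|lborel. g v)"
    unfolding split by (rule set_integral_Un[OF _ gi1 gi2]) auto
  then have Ig: "ln (L/2) / 4 \<le> (LINT v:{1<..<H}|lborel. g v)" using I1 I2' by linarith
  have atom: "0 \<le> (1 / H) * (H * x0 H H - dev (x0 H) H)"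
    using dev0_le1[OF H1 H1] H0 by simp
  show ?thesis using Ig atom unfolding mb_obj_def g_def L_def by linarith
qed


theorem theoremC6:
  shows "MBRev_ERC \<in> \<Omega>[at_top](\<lambda>H. ln (ln H))"
  unfolding bigomega_def
proof (intro CollectI exI[of _ "1/8"] conjI)
  show "(0::real) < 1/8" by simp
  show "\<forall>\<^sub>F H in at_top. 1/8 * norm (ln (ln H)) \<le> norm (MBRev_ERC H)"
    unfolding eventually_at_top_linorder
  proof (intro exI[of _ "exp 4"] allI impI)
    fix H :: real assume H: "exp 4 \<le> H"
    have H1: "1 < H" using H by (smt (verit) one_less_exp_iff)
    have L4: "4 \<le> ln H" using H H1 ln_ge_iff by simp
    have "mb_obj H (x0 H) \<le> MBRev_ERC H"
      unfolding MBRev_ERC_def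
      by (rule cSUP_upper[OF _ bdd_MBRev[OF H1]]) (use feasible_x0[OF H1] in simp)
    moreover have lo: "ln (ln H / 2) / 4 \<le> mb_obj H (x0 H)" by (rule mb_obj_x0_lower[OF H])
    moreover have e1: "ln (ln H / 2) = ln (ln H) - ln 2" using L4 by (simp add: ln_div)
    moreover have "ln 4 \<le> ln (ln H)" using L4 by simp
    moreover have "ln (4::real) = 2 * ln 2"
      using ln_realpow[of 2 2] by simp
    moreover have "0 < ln (ln H)" using L4 by simp
    ultimately show "1/8 * norm (ln (ln H)) \<le> norm (MBRev_ERC H)" by simp
  qed
qed

end
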